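(* For $a\ge0$ and $x>0$ let $$G_a(x)=\log\Gamma(x)-\left(x-\tfrac12\right)\log x-\tfrac1{12}\Psi'(x+a)+x-\tfrac12\log(2\pi).$$ Then for all $x>0$, $$G_a(x)=\int_0^{+\infty}\frac{t-2+(2+t)e^{-t}-\frac{t^3}{6}e^{-at}}{2t^2(1-e^{-t})}\,e^{-xt}\,\mathrm{d}t.$$ Moreover, $G_a$ is completely monotone on $(0,+\infty)$ if and only if $a\ge\frac12$, and $-G_a$ is completely monotone on $(0,+\infty)$ if and only if $a=0$.
   Context: $\Gamma$ is Euler's Gamma function and $\Psi=(\log\Gamma)'$ is the digamma function, so $\Psi'$ is the trigamma function. A function $f:(0,+\infty)\to\mathbb{R}$ is called completely monotone (CM) if $f\in C^\infty(0,+\infty)$ and $(-1)^k f^{(k)}(t)>0$ for all $t>0$ and all $k=0,1,2,\dots$. *)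

theory Defs
  imports "HOL-Analysis.Analysis"
begin

definition completely_monotone :: "(real \<Rightarrow> real) \<Rightarrow> bool" where
  "completely_monotone f \<longleftrightarrow>
     (\<forall>k. \<forall>t>0. ((deriv ^^ k) f) differentiable (at t)) \<and>
     (\<forall>k. \<forall>t>0. (-1) ^ k * (deriv ^^ k) f t > 0)"

text \<open>G_a(x); the trigamma function is Polygamma 1.\<close>
definition G :: "real \<Rightarrow> real \<Rightarrow> real" where
  "G a x = ln_Gamma x - (x - 1/2) * ln x - 1/12 * Polygamma 1 (x + a) + x - 1/2 * ln (2 * pi)"

end

theory Submission
  imports Defs "HOL-Real_Asymp.Real_Asymp"
begin


lemma pos_from_deriv:
  fixes f f' :: "real \<Rightarrow> real"
  assumes d: "\<And>x. (f has_real_derivative f' x) (at x)" and p: "\<And>x. x > 0 \<Longrightarrow> f' x > 0"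
    and t: "t > 0"
  shows "f 0 < f t"
proof (rule DERIV_pos_imp_increasing_open[OF t])
  show "\<exists>y. (f has_real_derivative y) (at x) \<and> 0 < y" if "0 < x" "x < t" for x
    using d p that by blast
  show "continuous_on {0..t} f"
    by (meson DERIV_isCont continuous_at_imp_continuous_on d)
qed

lemma nonneg_from_deriv:
  fixes f f' :: "real \<Rightarrow> real"
  assumes d: "\<And>x. (f has_real_derivative f' x) (at x)" and p: "\<And>x. x > 0 \<Longrightarrow> f' x \<ge> 0"
    and t: "t \<ge> 0"
  shows "f 0 \<le> f t"
proof (rule DERIV_nonneg_imp_increasing_open[OF t])
  show "\<exists>y. (f has_real_derivative y) (at x) \<and> 0 \<le> y" if "0 < x" "x < t" for x
    using d p that by blast
  show "continuous_on {0..t} f"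
    by (meson DERIV_isCont continuous_at_imp_continuous_on d)
qed

lemma N_nonneg: "t \<ge> 0 \<Longrightarrow> 0 \<le> t - 2 + (2+t)*exp(-t::real)"
  using nonneg_from_deriv[of "\<lambda>t. t - 2 + (2+t)*exp(-t::real)" "\<lambda>t. 1 - (1+t)*exp(-t)" t]
proof -
  assume t: "t \<ge> 0"
  have "(\<lambda>t. t - 2 + (2+t)*exp(-t::real)) 0 \<le> (\<lambda>t. t - 2 + (2+t)*exp(-t::real)) t"
  proof (rule nonneg_from_deriv[where f'="\<lambda>t. 1 - (1+t)*exp(-t)", OF _ _ t])
    show "((\<lambda>t. t - 2 + (2+t)*exp(-t::real)) has_real_derivative 1 - (1+x)*exp(-x)) (at x)" for x
      by (auto intro!: derivative_eq_intros simp: algebra_simps)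
    show "0 \<le> 1 - (1 + x) * exp (- x)" if "x > 0" for x :: real
    proof -
      have "1 + x \<le> exp x" by simp
      hence "(1+x) * exp(-x) \<le> exp x * exp (-x)" by (intro mult_right_mono) auto
      thus ?thesis by (simp add: exp_minus_inverse)
    qed
  qed
  thus ?thesis by simp
qed

lemma N_le_t: "t \<ge> 0 \<Longrightarrow> t - 2 + (2+t)*exp(-t::real) \<le> t"
proof -
  assume "t \<ge> 0"
  have "1 + t \<le> exp t" by simp
  hence "2 + t \<le> 2 * exp t" using \<open>t\<ge>0\<close> by linarith
  hence "(2+t) * exp(-t) \<le> 2 * exp t * exp (-t)" by (intro mult_right_mono) auto
  also have "2 * exp t * exp (-t) = 2" by (simp add: exp_minus_inverse)
  finally show ?thesis by simp
qed

lemma N_lt_cube: assumes t: "t > 0" shows "t - 2 + (2+t)*exp(-t::real) < t^3/6"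
proof -
  have q1: "0 < x^2/2 - 1 + (1+x)*exp(-x)" if x: "x > 0" for x :: real
  proof -
    have "(\<lambda>x. x^2/2 - 1 + (1+x)*exp(-x::real)) 0 < (\<lambda>x. x^2/2 - 1 + (1+x)*exp(-x::real)) x"
    proof (rule pos_from_deriv[where f'="\<lambda>x. x - x*exp(-x)", OF _ _ x])
      show "((\<lambda>x. x^2/2 - 1 + (1+x)*exp(-x::real)) has_real_derivative y - y*exp(-y)) (at y)" for y
        by (auto intro!: derivative_eq_intros simp: algebra_simps)
      show "0 < y - y * exp (- y)" if "y > 0" for y :: real
        using that by (simp add: mult_less_cancel_left1)
    qed
    thus ?thesis by simp
  qed
  have "(\<lambda>x. x^3/6 - (x - 2 + (2+x)*exp(-x::real))) 0 < (\<lambda>x. x^3/6 - (x - 2 + (2+x)*exp(-x::real))) t"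
  proof (rule pos_from_deriv[where f'="\<lambda>x. x^2/2 - 1 + (1+x)*exp(-x)", OF _ q1 t])
    show "((\<lambda>x. x^3/6 - (x - 2 + (2+x)*exp(-x::real))) has_real_derivative y^2/2 - 1 + (1+y)*exp(-y)) (at y)" for y
      by (auto intro!: derivative_eq_intros simp: algebra_simps power2_eq_square power3_eq_cube)
  qed
  thus ?thesis by simp
qed

lemma N_gt_half: assumes t: "t > 0" shows "t^3/6 * exp(-t/2) < t - 2 + (2+t)*exp(-t::real)"
proof -
  have s1: "0 < exp(x/2)/2 + exp(-x/2)/2 - 1" if x: "x > 0" for x :: real
  proof -
    have "(\<lambda>x. exp(x/2)/2 + exp(-x/2)/2 - 1) 0 < (\<lambda>x. exp(x/2)/2 + exp(-x/2)/2 - 1::real) x"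
    proof (rule pos_from_deriv[where f'="\<lambda>x. exp(x/2)/4 - exp(-x/2)/4", OF _ _ x])
      show "((\<lambda>x. exp(x/2)/2 + exp(-x/2)/2 - 1::real) has_real_derivative exp(y/2)/4 - exp(-y/2)/4) (at y)" for y
        by (auto intro!: derivative_eq_intros simp: algebra_simps)
      show "0 < exp(y/2)/4 - exp(-y/2)/4" if "y > 0" for y :: real
        using that by simp
    qed
    thus ?thesis by simp
  qed
  have s2: "0 < exp(x/2) - exp(-x/2) - x" if x: "x > 0" for x :: real
  proof -
    have "(\<lambda>x. exp(x/2) - exp(-x/2) - x) 0 < (\<lambda>x. exp(x/2) - exp(-x/2) - x::real) x"
    proof (rule pos_from_deriv[where f'="\<lambda>x. exp(x/2)/2 + exp(-x/2)/2 - 1", OF _ s1 x])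
      show "((\<lambda>x. exp(x/2) - exp(-x/2) - x::real) has_real_derivative exp(y/2)/2 + exp(-y/2)/2 - 1) (at y)" for y
        by (auto intro!: derivative_eq_intros simp: algebra_simps)
    qed
    thus ?thesis by simp
  qed
  have s3: "0 < x/2 * (exp(x/2) - exp(-x/2) - x)" if x: "x > 0" for x :: real
    using s2[OF x] x by simp
  have "(\<lambda>x. (x-2)*exp(x/2) + (2+x)*exp(-x/2) - x^3/6) 0 < (\<lambda>x. (x-2)*exp(x/2) + (2+x)*exp(-x/2) - x^3/6::real) t"
  proof (rule pos_from_deriv[where f'="\<lambda>x. x/2 * (exp(x/2) - exp(-x/2) - x)", OF _ s3 t])
    show "((\<lambda>x. (x-2)*exp(x/2) + (2+x)*exp(-x/2) - x^3/6::real) has_real_derivative y/2 * (exp(y/2) - exp(-y/2) - y)) (at y)" for y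
      by (auto intro!: derivative_eq_intros simp: algebra_simps power2_eq_square)
  qed
  hence "t^3/6 < (t-2)*exp(t/2) + (2+t)*exp(-t/2)" by simp
  hence "t^3/6 * exp(-t/2) < ((t-2)*exp(t/2) + (2+t)*exp(-t/2)) * exp(-t/2)"
    by (intro mult_strict_right_mono) auto
  also have "\<dots> = (t-2)*(exp(t/2)*exp(-t/2)) + (2+t)*(exp(-t/2)*exp(-t/2))"
    by (simp add: algebra_simps)
  also have "exp(t/2)*exp(-t/2) = 1" by (simp add: exp_minus_inverse)
  also have "exp(-t/2)*exp(-t/2) = exp(-t)" by (simp flip: exp_add)
  finally show ?thesis by simp
qed

lemma N_upper5: assumes t: "t \<ge> 0" shows "t - 2 + (2+t)*exp(-t::real) \<le> t^3/6 - t^4/12 + t^5/40"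
proof -
  have w: "0 \<le> 1 - x + x^2/2 - exp(-x)" if x: "x \<ge> 0" for x :: real
  proof -
    have "(\<lambda>x. 1 - x + x^2/2 - exp(-x)) 0 \<le> (\<lambda>x. 1 - x + x^2/2 - exp(-x::real)) x"
    proof (rule nonneg_from_deriv[where f'="\<lambda>x. -1 + x + exp(-x)", OF _ _ x])
      show "((\<lambda>x. 1 - x + x^2/2 - exp(-x::real)) has_real_derivative -1 + y + exp(-y)) (at y)" for y
        by (auto intro!: derivative_eq_intros simp: algebra_simps)
      show "0 \<le> -1 + y + exp(-y)" for y :: real
        using exp_ge_add_one_self[of "-y"] by linarith
    qed
    thus ?thesis by simp
  qed
  have r2: "0 \<le> x * (1 - x + x^2/2 - exp(-x))" if x: "x > 0" for x :: real
    using w[of x] x by simp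
  have r1: "0 \<le> x^2/2 - x^3/3 + x^4/8 - (1 - (1+x)*exp(-x))" if x: "x > 0" for x :: real
  proof -
    have "(\<lambda>x. x^2/2 - x^3/3 + x^4/8 - (1 - (1+x)*exp(-x))) 0 \<le> (\<lambda>x. x^2/2 - x^3/3 + x^4/8 - (1 - (1+x)*exp(-x::real))) x"
    proof (rule nonneg_from_deriv[where f'="\<lambda>x. x * (1 - x + x^2/2 - exp(-x))", OF _ r2])
      show "((\<lambda>x. x^2/2 - x^3/3 + x^4/8 - (1 - (1+x)*exp(-x::real))) has_real_derivative y * (1 - y + y^2/2 - exp(-y))) (at y)" for y
        by (auto intro!: derivative_eq_intros simp: algebra_simps power2_eq_square power3_eq_cube)
    qed (use x in auto)
    thus ?thesis by simp
  qed
  have "(\<lambda>x. x^3/6 - x^4/12 + x^5/40 - (x - 2 + (2+x)*exp(-x))) 0 \<le> (\<lambda>x. x^3/6 - x^4/12 + x^5/40 - (x - 2 + (2+x)*exp(-x::real))) t"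
  proof (rule nonneg_from_deriv[where f'="\<lambda>x. x^2/2 - x^3/3 + x^4/8 - (1 - (1+x)*exp(-x))", OF _ r1 t])
    show "((\<lambda>x. x^3/6 - x^4/12 + x^5/40 - (x - 2 + (2+x)*exp(-x::real))) has_real_derivative y^2/2 - y^3/3 + y^4/8 - (1 - (1+y)*exp(-y))) (at y)" for y
      by (auto intro!: derivative_eq_intros simp: algebra_simps power2_eq_square power3_eq_cube)
  qed
  thus ?thesis by simp
qed



lemma exp_taylor_pos: "u \<ge> 0 \<Longrightarrow> exp(-u) - 1 + u \<le> u^2/(2::real)"
proof -
  assume u: "u \<ge> 0"
  have "(\<lambda>u. u^2/2 - (exp(-u) - 1 + u)) 0 \<le> (\<lambda>u. u^2/2 - (exp(-u) - 1 + u::real)) u"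
  proof (rule nonneg_from_deriv[where f'="\<lambda>u. u + exp(-u) - 1", OF _ _ u])
    show "((\<lambda>u. u^2/2 - (exp(-u) - 1 + u::real)) has_real_derivative y + exp(-y) - 1) (at y)" for y
      by (auto intro!: derivative_eq_intros simp: algebra_simps)
    show "0 \<le> y + exp(-y) - 1" for y :: real using exp_ge_add_one_self[of "-y"] by linarith
  qed
  thus ?thesis by simp
qed

lemma exp_taylor_neg: "v \<ge> 0 \<Longrightarrow> exp(v) - 1 - v \<le> v^2/2 * exp (v::real)"
proof -
  assume v: "v \<ge> 0"
  have "(\<lambda>v. v^2/2 - 1 + (1+v)*exp(-v)) 0 \<le> (\<lambda>v. v^2/2 - 1 + (1+v)*exp(-v::real)) v"
  proof (rule nonneg_from_deriv[where f'="\<lambda>w. w - w*exp(-w)", OF _ _ v])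
    show "((\<lambda>v. v^2/2 - 1 + (1+v)*exp(-v::real)) has_real_derivative y - y*exp(-y)) (at y)" for y
      by (auto intro!: derivative_eq_intros simp: algebra_simps)
    show "0 \<le> y - y*exp(-y)" if "y > 0" for y :: real using that by (simp add: mult_le_cancel_left1)
  qed
  hence "1 - (1+v)*exp(-v) \<le> v^2/2" by simp
  hence "(1 - (1+v)*exp(-v)) * exp v \<le> v^2/2 * exp v" by (intro mult_right_mono) auto
  also have "(1 - (1+v)*exp(-v)) * exp v = exp v - (1+v) * (exp (-v) * exp v)" by (simp add: algebra_simps)
  also have "exp (-v) * exp v = 1" by (simp flip: exp_add)
  finally show ?thesis by simp
qed

lemma exp_taylor_bound:
  fixes x y c t :: real
  assumes t: "t \<ge> 0" and cx: "c \<le> x" and cy: "c \<le> y"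
  shows "\<bar>exp(-y*t) - exp(-x*t) + (y-x)*t*exp(-x*t)\<bar> \<le> (y-x)^2 * t^2/2 * exp(-c*t)"
proof -
  define u where "u = (y-x)*t"
  have e: "exp(-y*t) = exp(-x*t) * exp(-u)" unfolding u_def by (simp flip: exp_add add: algebra_simps)
  have eq: "exp(-y*t) - exp(-x*t) + (y-x)*t*exp(-x*t) = exp(-x*t) * (exp(-u) - 1 + u)"
    unfolding e u_def by (simp add: algebra_simps)
  have nn: "0 \<le> exp(-u) - 1 + u" using exp_ge_add_one_self[of "-u"] by linarith
  have u2: "u^2 = (y-x)^2 * t^2" unfolding u_def by (simp add: power_mult_distrib)
  show ?thesis
  proof (cases "u \<ge> 0")
    case True
    have "\<bar>exp(-x*t) * (exp(-u) - 1 + u)\<bar> = exp(-x*t) * (exp(-u) - 1 + u)" using nn by simp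
    also have "\<dots> \<le> exp(-x*t) * (u^2/2)" using exp_taylor_pos[OF True] by (intro mult_left_mono) auto
    also have "\<dots> \<le> exp(-c*t) * (u^2/2)" using cx t by (intro mult_right_mono) (auto simp: mult_right_mono)
    finally show ?thesis unfolding eq u2 by (simp add: algebra_simps)
  next
    case False
    have "exp(-u) - 1 + u \<le> u^2/2 * exp(-u)" using exp_taylor_neg[of "-u"] False by simp
    hence "\<bar>exp(-x*t) * (exp(-u) - 1 + u)\<bar> \<le> exp(-x*t) * (u^2/2 * exp(-u))"
      using nn by (simp add: mult_left_mono)
    also have "\<dots> = exp(-y*t) * (u^2/2)" using e by (simp add: algebra_simps)
    also have "\<dots> \<le> exp(-c*t) * (u^2/2)" using cy t by (intro mult_right_mono) (auto simp: mult_right_mono)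
    finally show ?thesis unfolding eq u2 by (simp add: algebra_simps)
  qed
qed

lemma pow_exp_bound:
  fixes t c :: real
  assumes t: "t \<ge> 0" and c: "c > 0"
  shows "t^k * exp(-c*t) \<le> (2*real k/c)^k * exp(-(c/2)*t)"
proof (cases "k = 0")
  case True thus ?thesis using t c by simp
next
  case False
  have "(1 + (c*t/2) / real k)^k \<le> exp (c*t/2)"
  proof (rule exp_ge_one_plus_x_over_n_power_n)
    have "0 \<le> c*t" using t c by simp
    thus "c * t / 2 \<ge> - real k" by simp
  qed (use False in auto)
  moreover have "t^k = (2*real k/c)^k * ((c*t/2)/k)^k" using c False
    by (simp flip: power_mult_distrib)
  moreover have "((c*t/2)/k)^k \<le> (1 + (c*t/2) / real k)^k"
    using t c by (intro power_mono) auto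
  moreover have "0 \<le> (2*real k/c)^k" using c by simp
  ultimately have "t^k \<le> (2*real k/c)^k * exp (c*t/2)"
    by (metis mult_left_mono order_trans)
  hence "t^k * exp(-c*t) \<le> (2*real k/c)^k * exp (c*t/2) * exp(-c*t)" by (intro mult_right_mono) auto
  also have "(2*real k/c)^k * exp (c*t/2) * exp(-c*t) = (2*real k/c)^k * exp(-(c/2)*t)"
    by (simp add: mult.assoc flip: exp_add)
  finally show ?thesis .
qed

lemma open_Ioi_lebesgue: "{0::real<..} \<in> sets lebesgue"
  by (simp add: borel_open sets_completionI_sets)

lemma abs_int_bound:
  fixes f g :: "real \<Rightarrow> real"
  assumes "continuous_on {0<..} f" "g integrable_on {0<..}" "\<And>t. t > 0 \<Longrightarrow> \<bar>f t\<bar> \<le> g t"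
  shows "f absolutely_integrable_on {0<..}" "f integrable_on {0<..}"
proof -
  show *: "f absolutely_integrable_on {0<..}"
    by (rule measurable_bounded_by_integrable_imp_absolutely_integrable[OF
          continuous_imp_measurable_on_sets_lebesgue[OF assms(1) open_Ioi_lebesgue] open_Ioi_lebesgue assms(2)])
       (use assms(3) in auto)
  thus "f integrable_on {0<..}" using set_lebesgue_integral_eq_integral(1) by blast
qed

lemma has_integral_Ici_Ioi: fixes f :: "real \<Rightarrow> real" shows "(f has_integral I) {0..} \<Longrightarrow> (f has_integral I) {0::real<..}"
proof -
  assume "(f has_integral I) {0..}"
  moreover have "negligible {x \<in> {0::real..} - {0<..}. f x \<noteq> 0}"
    by (rule negligible_subset[of "{0}"]) auto
  moreover have "negligible {x \<in> {0::real<..} - {0..}. f x \<noteq> 0}"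
    by (rule negligible_subset[of "{}"]) auto
  ultimately show ?thesis using has_integral_spike_set_eq[of "{0..}" "{0<..}" f I] by blast
qed

lemma exp_integral: "(x::real) > 0 \<Longrightarrow> ((\<lambda>t. exp(-x*t)) has_integral 1/x) {0<..}"
  using has_integral_exp_minus_to_infinity[of x 0] by (intro has_integral_Ici_Ioi) simp

lemma pow_exp_integrable: "(c::real) > 0 \<Longrightarrow> (\<lambda>t. t^k * exp(-c*t)) integrable_on {0<..}"
proof -
  assume c: "c > 0"
  have h: "(\<lambda>t. (2*real k/c)^k * exp(-(c/2)*t)) integrable_on {0<..}"
  proof -
    have "(\<lambda>t. exp(-(c/2)*t)) integrable_on {0<..}"
      using c by (intro has_integral_integrable[OF exp_integral]) simp
    from integrable_on_cmult_left[OF this, of "(2*real k/c)^k"] show ?thesis by simp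
  qed
  show ?thesis
  proof (rule abs_int_bound(2)[OF _ h])
    show "continuous_on {0<..} (\<lambda>t. t ^ k * exp (- c * t))" by (intro continuous_intros)
    show "\<bar>t ^ k * exp (- c * t)\<bar> \<le> (2*real k/c)^k * exp(-(c/2)*t)" if "t > 0" for t
      using pow_exp_bound[of t c k] that c by simp
  qed
qed

lemma to_inf_FTC:
  fixes F f :: "real \<Rightarrow> real"
  assumes d: "\<And>t. (F has_real_derivative f t) (at t)" and nn: "\<And>t. t \<ge> 0 \<Longrightarrow> f t \<ge> 0"
    and lim: "(F \<longlongrightarrow> L) at_top"
  shows "(f has_integral (L - F 0)) {0<..}"
proof (rule has_integral_Ici_Ioi, rule has_integral_to_inf)
  have vd: "(F has_vector_derivative f x) (at x within {0..y})" for x y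
    using has_field_derivative_at_within[OF d, of x "{0..y}"] by (simp add: has_real_derivative_iff_has_vector_derivative)
  have ftc: "(f has_integral (F y - F 0)) {0..y}" if "y \<ge> 0" for y
    using that vd by (intro fundamental_theorem_of_calculus) auto
  show "f integrable_on {0..y}" for y
  proof (cases "y \<ge> 0")
    case True thus ?thesis using ftc has_integral_integrable by blast
  next
    case False hence "{0..y} = {}" by auto
    thus ?thesis by (simp only: integrable_on_empty)
  qed
  have ev: "\<forall>\<^sub>F y in at_top. F y - F 0 = integral {0..y} f"
    using eventually_ge_at_top[of "0::real"] by eventually_elim (simp add: integral_unique[OF ftc])
  have "((\<lambda>y. F y - F 0) \<longlongrightarrow> L - F 0) at_top" by (intro tendsto_intros lim)
  from Lim_transform_eventually[OF this ev]
  show "((\<lambda>y. integral {0..y} f) \<longlongrightarrow> L - F 0) at_top" .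
qed (use nn in auto)

lemma t_exp_integral: "(x::real) > 0 \<Longrightarrow> ((\<lambda>t. t * exp(-x*t)) has_integral 1/x^2) {0<..}"
proof -
  assume x: "x > 0"
  have "((\<lambda>t. t * exp(-x*t)) has_integral (0 - (-(0/x + 1/x^2) * exp(-x*0)))) {0<..}"
  proof (rule to_inf_FTC)
    show "((\<lambda>t. -(t/x + 1/x^2) * exp(-x*t)) has_real_derivative t * exp(-x*t)) (at t)" for t
      using x by (auto intro!: derivative_eq_intros simp: field_simps power2_eq_square)
    show "((\<lambda>t. -(t/x + 1/x^2) * exp(-x*t)) \<longlongrightarrow> 0) at_top" using x by real_asymp
  qed (use x in auto)
  thus ?thesis by simp
qed

lemma t2_exp_integral: "(x::real) > 0 \<Longrightarrow> ((\<lambda>t. t^2 * exp(-x*t)) has_integral 2/x^3) {0<..}"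
proof -
  assume x: "x > 0"
  have "((\<lambda>t. t^2 * exp(-x*t)) has_integral (0 - (-(0^2/x + 2*0/x^2 + 2/x^3) * exp(-x*0)))) {0<..}"
  proof (rule to_inf_FTC)
    show "((\<lambda>t. -(t^2/x + 2*t/x^2 + 2/x^3) * exp(-x*t)) has_real_derivative t^2 * exp(-x*t)) (at t)" for t
      using x by (auto intro!: derivative_eq_intros simp: field_simps power2_eq_square power3_eq_cube)
    show "((\<lambda>t. -(t^2/x + 2*t/x^2 + 2/x^3) * exp(-x*t)) \<longlongrightarrow> 0) at_top" using x by real_asymp
  qed (use x in auto)
  thus ?thesis by simp
qed



definition LT :: "nat \<Rightarrow> (real \<Rightarrow> real) \<Rightarrow> real \<Rightarrow> real" where
  "LT k h x = integral {0<..} (\<lambda>t. (-t)^k * h t * exp(-x*t))"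

lemma LT_integrable:
  fixes h :: "real \<Rightarrow> real" and M x :: real
  assumes hc: "continuous_on {0<..} h" and hb: "\<And>t. t>0 \<Longrightarrow> \<bar>h t\<bar> \<le> M*(1+t)" and x: "x > 0"
  shows "(\<lambda>t. (-t)^k * h t * exp(-x*t)) integrable_on {0<..}"
proof (rule abs_int_bound(2)[where g="\<lambda>t. M * (t^k * exp(-x*t)) + M * (t^(Suc k) * exp(-x*t))"])
  show "continuous_on {0<..} (\<lambda>t. (-t)^k * h t * exp(-x*t))"
    by (intro continuous_intros hc)
  show "(\<lambda>t. M * (t^k * exp(-x*t)) + M * (t^(Suc k) * exp(-x*t))) integrable_on {0<..}"
  proof (rule integrable_add)
    show "(\<lambda>t. M * (t^k * exp(-x*t))) integrable_on {0<..}"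
      using integrable_on_cmult_left[OF pow_exp_integrable[OF x], of M k] by simp
    show "(\<lambda>t. M * (t^(Suc k) * exp(-x*t))) integrable_on {0<..}"
      using integrable_on_cmult_left[OF pow_exp_integrable[OF x], of M "Suc k"] by simp
  qed
  show "\<bar>(-t)^k * h t * exp(-x*t)\<bar> \<le> M * (t^k * exp(-x*t)) + M * (t^(Suc k) * exp(-x*t))"
    if t: "t > 0" for t
  proof -
    have "\<bar>(-t)^k * h t * exp(-x*t)\<bar> = t^k * \<bar>h t\<bar> * exp(-x*t)"
      using t by (simp add: abs_mult power_abs)
    also have "\<dots> \<le> t^k * (M*(1+t)) * exp(-x*t)"
      using hb[OF t] t by (intro mult_right_mono mult_left_mono) auto
    also have "\<dots> = M * (t^k * exp(-x*t)) + M * (t^(Suc k) * exp(-x*t))"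
      by (simp add: algebra_simps)
    finally show ?thesis .
  qed
qed

lemma deriv_from_quad:
  fixes f :: "real \<Rightarrow> real"
  assumes d: "d > 0" and q: "\<And>y. \<bar>y - x\<bar> < d \<Longrightarrow> \<bar>f y - f x - D*(y-x)\<bar> \<le> K*(y-x)^2"
  shows "(f has_real_derivative D) (at x)"
proof -
  have "((\<lambda>y. (f y - f x)/(y-x) - D) \<longlongrightarrow> 0) (at x)"
  proof (rule Lim_null_comparison)
    show "((\<lambda>y. K * \<bar>y - x\<bar>) \<longlongrightarrow> 0) (at x)"
      by (rule tendsto_eq_intros refl)+ simp
    show "eventually (\<lambda>y. norm ((f y - f x)/(y-x) - D) \<le> K * \<bar>y - x\<bar>) (at x)"
      unfolding eventually_at
    proof (intro exI[of _ d] conjI ballI impI d)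
      fix y :: real assume y: "y \<noteq> x \<and> dist y x < d"
      hence yx: "\<bar>y - x\<bar> > 0" "\<bar>y - x\<bar> < d" by (auto simp: dist_real_def)
      have "norm ((f y - f x)/(y-x) - D) = \<bar>f y - f x - D*(y-x)\<bar> / \<bar>y - x\<bar>"
      proof -
        have "(f y - f x)/(y-x) - D = (f y - f x - D*(y-x)) / (y - x)" using yx by (simp add: field_simps)
        thus ?thesis by (simp add: abs_divide)
      qed
      also have "\<dots> \<le> K*(y-x)^2 / \<bar>y - x\<bar>"
        using q[OF yx(2)] yx by (intro divide_right_mono) auto
      also have "\<dots> = K * \<bar>y - x\<bar>"
      proof -
        have *: "\<And>a::real. a > 0 \<Longrightarrow> K*a^2/a = K*a" by (simp add: power2_eq_square)
        show ?thesis by (metis *[OF yx(1)] power2_abs)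
      qed
      finally show "norm ((f y - f x)/(y-x) - D) \<le> K * \<bar>y - x\<bar>" .
    qed
  qed
  hence "((\<lambda>y. (f y - f x)/(y-x)) \<longlongrightarrow> D) (at x)"
    using Lim_null[of "\<lambda>y. (f y - f x)/(y-x)" D "at x"] by blast
  thus ?thesis by (simp add: has_field_derivative_iff)
qed

lemma LT_deriv:
  fixes h :: "real \<Rightarrow> real" and M x :: real
  assumes hc: "continuous_on {0<..} h" and hb: "\<And>t. t>0 \<Longrightarrow> \<bar>h t\<bar> \<le> M*(1+t)" and x: "x > 0"
  shows "(LT k h has_real_derivative LT (Suc k) h x) (at x)"
proof -
  define c where "c = x/2"
  have c: "c > 0" "c < x" using x by (auto simp: c_def)
  define I where "I = integral {0<..} (\<lambda>t. t^(k+2)*exp(-c*t)) + integral {0<..} (\<lambda>t. t^(k+3)*exp(-c*t))"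
  have M0: "M \<ge> 0" using hb[of 1] by simp
  show ?thesis
  proof (rule deriv_from_quad[where d=c and K="M/2*I"])
    show "c > 0" by fact
    fix y assume yx: "\<bar>y - x\<bar> < c"
    have "- c < y - x" using abs_less_iff[THEN iffD1, OF yx] by simp
    hence y: "y > 0" "c \<le> y" using c unfolding c_def by auto
    define A where "A = (\<lambda>t. (-t)^k * h t * exp(-y*t))"
    define B where "B = (\<lambda>t. (-t)^k * h t * exp(-x*t))"
    define C where "C = (\<lambda>t. (-t)^(Suc k) * h t * exp(-x*t))"
    have iA: "A integrable_on {0<..}" unfolding A_def by (rule LT_integrable[OF hc hb y(1)])
    have iB: "B integrable_on {0<..}" unfolding B_def by (rule LT_integrable[OF hc hb x])
    have iC: "C integrable_on {0<..}" unfolding C_def by (rule LT_integrable[OF hc hb x])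
    have iC': "(\<lambda>t. (y-x) * C t) integrable_on {0<..}"
      using integrable_on_cmult_left[OF iC, of "y-x"] by simp
    have eq: "LT k h y - LT k h x - LT (Suc k) h x * (y-x) = integral {0<..} (\<lambda>t. A t - B t - (y-x) * C t)"
    proof -
      have "integral {0<..} (\<lambda>t. A t - B t - (y-x) * C t) = integral {0<..} (\<lambda>t. A t - B t) - integral {0<..} (\<lambda>t. (y-x) * C t)"
        by (rule integral_diff[OF integrable_diff[OF iA iB] iC'])
      also have "integral {0<..} (\<lambda>t. A t - B t) = integral {0<..} A - integral {0<..} B"
        by (rule integral_diff[OF iA iB])
      also have "integral {0<..} (\<lambda>t. (y-x) * C t) = (y-x) * integral {0<..} C"
        using integral_mult[OF iC, of "y-x"] by simp
      finally show ?thesis by (simp add: LT_def A_def B_def C_def algebra_simps)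
    qed
    define g where "g = (\<lambda>t. M/2*(y-x)^2 * (t^(k+2)*exp(-c*t) + t^(k+3)*exp(-c*t)))"
    have i2: "(\<lambda>t. t^(k+2)*exp(-c*t)) integrable_on {0<..}" by (rule pow_exp_integrable[OF c(1)])
    have i3: "(\<lambda>t. t^(k+3)*exp(-c*t)) integrable_on {0<..}" by (rule pow_exp_integrable[OF c(1)])
    have ig: "g integrable_on {0<..}"
      unfolding g_def using integrable_on_cmult_left[OF integrable_add[OF i2 i3], of "M/2*(y-x)^2"] by simp
    have intg: "integral {0<..} g = M/2*I*(y-x)^2"
    proof -
      have "integral {0<..} g = M/2*(y-x)^2 * integral {0<..} (\<lambda>t. t^(k+2)*exp(-c*t) + t^(k+3)*exp(-c*t))"
        unfolding g_def using integral_mult[OF integrable_add[OF i2 i3], of "M/2*(y-x)^2"] by simp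
      also have "integral {0<..} (\<lambda>t. t^(k+2)*exp(-c*t) + t^(k+3)*exp(-c*t)) = I"
        unfolding I_def by (rule integral_add[OF i2 i3])
      finally show ?thesis by simp
    qed
    have pt: "norm (A t - B t - (y-x) * C t) \<le> g t" if t: "t \<in> {0<..}" for t
    proof -
      have t0: "t > 0" using t by simp
      have "A t - B t - (y-x) * C t = (-t)^k * h t * (exp(-y*t) - exp(-x*t) + (y-x)*t*exp(-x*t))"
        by (simp add: A_def B_def C_def algebra_simps)
      hence "norm (A t - B t - (y-x) * C t) = t^k * \<bar>h t\<bar> * \<bar>exp(-y*t) - exp(-x*t) + (y-x)*t*exp(-x*t)\<bar>"
        using t0 by (simp add: abs_mult power_abs)
      also have "\<dots> \<le> t^k * (M*(1+t)) * ((y-x)^2 * t^2/2 * exp(-c*t))"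
        using hb[OF t0] exp_taylor_bound[of t c x y] t0 y c
        by (intro mult_mono mult_left_mono) auto
      also have "\<dots> = g t" unfolding g_def power_add by (simp add: field_simps power2_eq_square power3_eq_cube)
      finally show ?thesis .
    qed
    have "norm (integral {0<..} (\<lambda>t. A t - B t - (y-x) * C t)) \<le> integral {0<..} g"
      by (rule integral_norm_bound_integral[OF integrable_diff[OF integrable_diff[OF iA iB] iC'] ig pt])
    thus "\<bar>LT k h y - LT k h x - LT (Suc k) h x * (y-x)\<bar> \<le> M/2*I*(y-x)^2"
      using eq intg by simp
  qed
qed

lemma LT_iter:
  fixes h g :: "real \<Rightarrow> real" and M :: real
  assumes hc: "continuous_on {0<..} h" and hb: "\<And>t. t>0 \<Longrightarrow> \<bar>h t\<bar> \<le> M*(1+t)"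
    and g: "\<And>x. x > 0 \<Longrightarrow> g x = LT 0 h x"
  shows "x > 0 \<Longrightarrow> (deriv^^k) g x = LT k h x \<and> ((deriv^^k) g has_real_derivative LT (Suc k) h x) (at x)"
proof (induction k arbitrary: x)
  case 0
  have "(g has_real_derivative LT (Suc 0) h x) (at x)"
    by (rule has_field_derivative_transform_within_open[OF LT_deriv[OF hc hb 0] open_greaterThan])
       (use 0 g in auto)
  thus ?case using 0 g by simp
next
  case (Suc k)
  have eqS: "(deriv^^Suc k) g y = LT (Suc k) h y" if "y > 0" for y
    using Suc.IH[OF that] DERIV_imp_deriv by (metis comp_apply funpow.simps(2))
  have "((deriv^^Suc k) g has_real_derivative LT (Suc (Suc k)) h x) (at x)"
    by (rule has_field_derivative_transform_within_open[OF LT_deriv[OF hc hb Suc.prems] open_greaterThan])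
       (use Suc.prems eqS in auto)
  thus ?case using eqS[OF Suc.prems] by simp
qed

lemma LT_pos:
  fixes h :: "real \<Rightarrow> real" and M x :: real
  assumes hc: "continuous_on {0<..} h" and hb: "\<And>t. t>0 \<Longrightarrow> \<bar>h t\<bar> \<le> M*(1+t)"
    and hp: "\<And>t. t > 0 \<Longrightarrow> h t > 0" and x: "x > 0"
  shows "(-1)^k * LT k h x > 0"
proof -
  define \<phi> where "\<phi> = (\<lambda>t. t^k * h t * exp(-x*t))"
  have eqf: "(-1)^k * ((-t)^k * h t * exp(-x*t)) = \<phi> t" for t
  proof -
    have "(-1)^k * (-t)^k = (t::real)^k" by (simp flip: power_mult_distrib)
    thus ?thesis unfolding \<phi>_def by (metis mult.assoc)
  qed
  have i0: "(\<lambda>t. (-t)^k * h t * exp(-x*t)) integrable_on {0<..}" by (rule LT_integrable[OF hc hb x])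
  have "(-1)^k * LT k h x = integral {0<..} (\<lambda>t. (-1)^k * ((-t)^k * h t * exp(-x*t)))"
    unfolding LT_def by (rule integral_mult[OF i0])
  also have "\<dots> = integral {0<..} \<phi>" by (simp only: eqf)
  finally have eq: "(-1)^k * LT k h x = integral {0<..} \<phi>" .
  have iphi: "\<phi> integrable_on {0<..}"
    using integrable_on_cmult_left[OF i0, of "(-1)^k"] by (simp only: of_real_power of_real_minus of_real_1 eqf)
  have cphi: "continuous_on {1..2} \<phi>" unfolding \<phi>_def
    by (intro continuous_intros continuous_on_subset[OF hc]) auto
  have ppos: "\<phi> t > 0" if "t > 0" for t using hp[OF that] that by (simp add: \<phi>_def)
  obtain z where z: "z \<in> {1..2}" "\<And>y. y \<in> {1..2} \<Longrightarrow> \<phi> z \<le> \<phi> y"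
    using continuous_attains_inf[OF compact_Icc _ cphi] by auto
  have "\<phi> z * 1 = integral {1..2::real} (\<lambda>_. \<phi> z)" by simp
  also have "\<dots> \<le> integral {1..2} \<phi>"
    by (rule integral_le) (use z cphi integrable_continuous_interval in auto)
  also have "\<dots> \<le> integral {0<..} \<phi>"
    by (rule integral_subset_le) (use iphi cphi integrable_continuous_interval ppos in \<open>auto intro: less_imp_le\<close>)
  finally show ?thesis using eq ppos[of z] z(1) by simp
qed

lemma CM_of_LT:
  fixes h g :: "real \<Rightarrow> real" and M :: real
  assumes hc: "continuous_on {0<..} h" and hb: "\<And>t. t>0 \<Longrightarrow> \<bar>h t\<bar> \<le> M*(1+t)"
    and hp: "\<And>t. t > 0 \<Longrightarrow> h t > 0" and g: "\<And>x. x > 0 \<Longrightarrow> g x = LT 0 h x"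
  shows "completely_monotone g"
  unfolding completely_monotone_def
proof (intro conjI allI impI)
  fix k :: nat and t :: real assume t: "t > 0"
  from LT_iter[OF hc hb g t, of k] show "(deriv ^^ k) g differentiable (at t)"
    using real_differentiable_def by blast
  from LT_iter[OF hc hb g t, of k] LT_pos[OF hc hb hp t, of k] show "(-1)^k * (deriv ^^ k) g t > 0"
    by simp
qed



lemma trigamma_integral:
  fixes x :: real
  assumes x: "x > 0"
  shows "((\<lambda>t. t * exp(-x*t) / (1 - exp(-t))) has_integral Polygamma 1 x) {0<..}"
proof -
  define f where "f = (\<lambda>m t. \<Sum>n<m. t * exp(-(x + real n)*t))"
  define s where "s = (\<lambda>m. \<Sum>n<m. 1/(x + real n)^2)"
  have fi: "(f m has_integral s m) {0<..}" for m
    unfolding f_def s_def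
  proof (rule has_integral_sum)
    fix n assume "n \<in> {..<m}"
    have "x + real n > 0" using x by simp
    from t_exp_integral[OF this] show "((\<lambda>t. t * exp(-(x + real n)*t)) has_integral 1/(x + real n)^2) {0<..}"
      by simp
  qed simp
  have ser: "(\<lambda>n. 1/(x + real n)^2) sums Polygamma 1 x"
    using Polygamma_LIMSEQ[of x 1] x by (simp add: inverse_eq_divide power2_eq_square)
  hence slim: "s \<longlonglongrightarrow> Polygamma 1 x" unfolding s_def sums_def .
  have fg: "(\<lambda>m. f m t) \<longlonglongrightarrow> t * exp(-x*t) / (1 - exp(-t))" if t: "t \<in> {0<..}" for t
  proof -
    have "exp(-t) < 1" using t by simp
    hence "(\<lambda>n. exp(-t)^n) sums (1 / (1 - exp(-t)))" using geometric_sums[of "exp(-t)"] by simp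
    hence "(\<lambda>n. t * exp(-x*t) * exp(-t)^n) sums (t * exp(-x*t) * (1 / (1 - exp(-t))))"
      by (rule sums_mult)
    moreover have "(\<lambda>n. t * exp(-x*t) * exp(-t)^n) = (\<lambda>n. t * exp(-(x + real n)*t))"
      by (rule ext) (simp add: algebra_simps flip: exp_of_nat_mult exp_add)
    ultimately have "(\<lambda>n. t * exp(-(x + real n)*t)) sums (t * exp(-x*t) * (1 / (1 - exp(-t))))"
      by metis
    thus ?thesis unfolding f_def sums_def by simp
  qed
  have mono: "f k t \<le> f (Suc k) t" if "t \<in> {0<..}" for k t
    using that by (simp add: f_def)
  have bou: "bounded (range (\<lambda>k. integral {0<..} (f k)))"
    using convergent_imp_bounded[OF slim] fi integral_unique by (metis (no_types, lifting) image_cong)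
  have *: "(\<lambda>t. t * exp(-x*t) / (1 - exp(-t))) integrable_on {0<..} \<and>
      (\<lambda>k. integral {0<..} (f k)) \<longlonglongrightarrow> integral {0<..} (\<lambda>t. t * exp(-x*t) / (1 - exp(-t)))"
    by (rule monotone_convergence_increasing[OF _ mono fg bou]) (use fi in blast)
  have "(\<lambda>k. integral {0<..} (f k)) = s" using fi integral_unique by auto
  with * have "s \<longlonglongrightarrow> integral {0<..} (\<lambda>t. t * exp(-x*t) / (1 - exp(-t)))" by simp
  with slim have "integral {0<..} (\<lambda>t. t * exp(-x*t) / (1 - exp(-t))) = Polygamma 1 x"
    using LIMSEQ_unique by blast
  with * show ?thesis using integrable_integral by fastforce
qed



definition bfun :: "real \<Rightarrow> real" where
  "bfun t = (t - 2 + (2+t)*exp(-t)) / (2*t^2*(1-exp(-t)))"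
definition ffun :: "real \<Rightarrow> real \<Rightarrow> real" where
  "ffun a t = (t - 2 + (2 + t) * exp (-t) - t^3 / 6 * exp (-a*t)) / (2 * t^2 * (1 - exp (-t)))"
definition Hfun :: "real \<Rightarrow> real" where
  "Hfun x = ln_Gamma x - (x - 1/2) * ln x + x - 1/2 * ln (2 * pi)"

lemma G_eq: "G a x = Hfun x - 1/12 * Polygamma 1 (x + a)"
  by (simp add: G_def Hfun_def)

lemma one_minus_exp_lower: "t \<ge> 0 \<Longrightarrow> t/(1+t) \<le> 1 - exp(-t::real)"
proof -
  assume t: "t \<ge> 0"
  have "1 + t \<le> exp t" by simp
  hence "exp(-t) \<le> 1/(1+t)" using t by (simp add: exp_minus field_simps)
  moreover have "t/(1+t) = 1 - 1/(1+t)" using t by (simp add: field_simps)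
  ultimately show ?thesis by simp
qed

lemma one_minus_exp_pos: "t > 0 \<Longrightarrow> 0 < 1 - exp(-t::real)"
  by simp

lemma bfun_nonneg: "t > 0 \<Longrightarrow> 0 \<le> bfun t"
  unfolding bfun_def using N_nonneg[of t] by (intro divide_nonneg_pos) auto

lemma bfun_le1: assumes t: "t > 0" shows "bfun t \<le> 1"
proof -
  define N where "N = t - 2 + (2+t)*exp(-t)"
  have den: "2*t^2*(t/(1+t)) \<le> 2*t^2*(1-exp(-t))"
    using one_minus_exp_lower[of t] t by (intro mult_left_mono) auto
  have dpos: "0 < 2*t^2*(t/(1+t))" using t by simp
  have "bfun t = N / (2*t^2*(1-exp(-t)))" by (simp add: bfun_def N_def)
  also have "\<dots> \<le> N / (2*t^2*(t/(1+t)))"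
    using N_nonneg[of t] t den dpos unfolding N_def by (intro divide_left_mono) auto
  also have "\<dots> = N * (1+t) / (2*t^3)" using t by (simp add: field_simps power2_eq_square power3_eq_cube)
  also have "\<dots> \<le> 1"
  proof (cases "t \<le> 1")
    case True
    have "N * (1+t) \<le> t^3/6 * 2" using N_lt_cube[OF t] N_nonneg[of t] True t unfolding N_def
      by (intro mult_mono) auto
    moreover have "t^3 > 0" using t by simp
    ultimately have "N*(1+t) \<le> 2*t^3" by linarith
    thus ?thesis using t by (simp add: divide_le_eq)
  next
    case False
    have "N * (1+t) \<le> t * (1+t)" using N_le_t[of t] t unfolding N_def by (intro mult_right_mono) auto
    also have "\<dots> \<le> 2*t^3"
    proof -
      have t1: "1 \<le> t" using False by simp
      have a1: "t*1 \<le> t*t" using mult_left_mono[OF t1, of t] t by simp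
      have a2: "t*t \<le> t*(t*t)" using mult_left_mono[OF a1, of t] t by simp
      show ?thesis using a1 a2 by (simp add: power3_eq_cube algebra_simps)
    qed
    finally show ?thesis using t by (simp add: divide_le_eq)
  qed
  finally show ?thesis .
qed

lemma bfun_cont: "continuous_on {0<..} bfun"
  unfolding bfun_def by (intro continuous_intros) auto

lemma ffun_cont: "continuous_on {0<..} (ffun a)"
  unfolding ffun_def by (intro continuous_intros) auto

lemma t_over_lower: "t > 0 \<Longrightarrow> t / (1 - exp(-t)) \<le> 1 + (t::real)"
proof -
  assume t: "t > 0"
  have "t/(1+t) \<le> 1 - exp(-t)" using one_minus_exp_lower[of t] t by simp
  hence "t \<le> (1 - exp(-t)) * (1+t)" using t by (simp add: divide_le_eq)
  thus ?thesis using t by (simp add: divide_le_eq mult.commute)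
qed

lemma ffun_split: assumes t: "t > 0" shows "ffun a t = bfun t - t*exp(-a*t)/(12*(1-exp(-t)))"
proof -
  define d where "d = 1 - exp(-t)"
  have d: "d \<noteq> 0" using t by (simp add: d_def)
  have "ffun a t = (t - 2 + (2+t)*exp(-t)) / (2*t^2*d) - (t^3/6*exp(-a*t)) / (2*t^2*d)"
    unfolding ffun_def d_def by (simp add: diff_divide_distrib)
  also have "(t^3/6*exp(-a*t)) / (2*t^2*d) = t*exp(-a*t)/(12*d)"
    using t d by (simp add: field_simps power2_eq_square power3_eq_cube)
  finally show ?thesis by (simp add: bfun_def d_def)
qed

lemma aux_abs3:
  fixes A C t :: real
  assumes "\<bar>C\<bar> \<le> (1+t)/12" "\<bar>A\<bar> \<le> 1" "0 < t"
  shows "\<bar>A - C\<bar> \<le> 2*(1+t)"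
proof -
  have "\<bar>A - C\<bar> \<le> \<bar>A\<bar> + \<bar>C\<bar>" by (rule abs_triangle_ineq4)
  also have "\<dots> \<le> 1 + (1+t)/12" using assms by (intro add_mono)
  also have "\<dots> \<le> 2*(1+t)" using assms(3) by simp
  finally show ?thesis .
qed

lemma ffun_bound: assumes t: "t > 0" and a: "a \<ge> 0" shows "\<bar>ffun a t\<bar> \<le> 2*(1+t)"
proof -
  have d: "1 - exp(-t) > 0" using t by simp
  have "\<bar>t*exp(-a*t)/(12*(1-exp(-t)))\<bar> = t*exp(-a*t)/(12*(1-exp(-t)))"
    using t d by simp
  also have "\<dots> = exp(-a*t) * (t/(1-exp(-t))) / 12"
    using d by (simp add: field_simps)
  also have "\<dots> \<le> 1 * (1+t) / 12"
    using t a t_over_lower[OF t] by (intro divide_right_mono mult_mono) auto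
  finally have "\<bar>t*exp(-a*t)/(12*(1-exp(-t)))\<bar> \<le> (1+t)/12" by simp
  moreover have "\<bar>bfun t\<bar> \<le> 1" using bfun_nonneg[OF t] bfun_le1[OF t] by simp
  ultimately show ?thesis unfolding ffun_split[OF t]
    by (intro aux_abs3 t)
qed



lemma pos_not_nonpos_Int: "(x::real) > 0 \<Longrightarrow> x \<notin> \<int>\<^sub>\<le>\<^sub>0"
  by auto

lemma bfun_hb: "t > 0 \<Longrightarrow> \<bar>bfun t\<bar> \<le> 1 * (1 + t)"
  using bfun_nonneg[of t] bfun_le1[of t] by simp

lemma LT2_bfun: assumes x: "x > 0" shows "LT 2 bfun x = Polygamma 1 x - 1/(2*x^2) - 1/x"
proof -
  have h1: "((\<lambda>t. t * exp(-x*t) / (1 - exp(-t)) - 1/2 * (t * exp(-x*t)) - exp(-x*t)) has_integral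
      (Polygamma 1 x - 1/2 * (1/x^2) - 1/x)) {0<..}"
    by (intro has_integral_diff has_integral_mult_right trigamma_integral t_exp_integral exp_integral x)
  have "((\<lambda>t. (-t)^2 * bfun t * exp(-x*t)) has_integral (Polygamma 1 x - 1/2 * (1/x^2) - 1/x)) {0<..}"
  proof (rule has_integral_eq[OF _ h1])
    fix t :: real assume "t \<in> {0<..}"
    hence t: "t > 0" by simp
    have d: "1 - exp(-t) \<noteq> 0" using t by simp
    show "t * exp(-x*t) / (1 - exp(-t)) - 1/2 * (t * exp(-x*t)) - exp(-x*t) = (-t)^2 * bfun t * exp(-x*t)"
      unfolding bfun_def using t d by (simp add: field_simps power2_eq_square)
  qed
  thus ?thesis unfolding LT_def by (simp add: integral_unique)
qed

lemma ln_Gamma_plus1_real: "x > 0 \<Longrightarrow> ln_Gamma (x + 1) = ln_Gamma x + ln (x::real)"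
proof -
  assume x: "x > 0"
  have "Gamma (x + 1) = x * Gamma x" using Gamma_plus1[of x] pos_not_nonpos_Int[OF x] by auto
  moreover have "ln (x * Gamma x) = ln x + ln (Gamma x)" using x Gamma_real_pos[OF x] by (rule ln_mult_pos)
  ultimately have "ln (Gamma (x+1)) = ln x + ln (Gamma x)" by simp
  thus ?thesis using x by (simp add: ln_Gamma_real_pos)
qed

lemma Gamma_dup_real:
  assumes x: "(x::real) > 0"
  shows "Gamma x * Gamma (x + 1/2) = exp ((1 - 2*x) * ln 2) * sqrt pi * Gamma (2*x)"
proof -
  have n1: "complex_of_real x \<notin> \<int>\<^sub>\<le>\<^sub>0" using pos_not_nonpos_Int[OF x] by (simp add: of_real_in_nonpos_Ints_iff)
  have n2: "complex_of_real x + 1/2 \<notin> \<int>\<^sub>\<le>\<^sub>0"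
  proof -
    have "complex_of_real x + 1/2 = complex_of_real (x + 1/2)" by simp
    thus ?thesis using pos_not_nonpos_Int[of "x+1/2"] x by (simp only: of_real_in_nonpos_Ints_iff) auto
  qed
  have "complex_of_real (Gamma x * Gamma (x + 1/2)) = Gamma (complex_of_real x) * Gamma (complex_of_real x + 1/2)"
    by (simp add: Gamma_complex_of_real flip: Gamma_complex_of_real)
  also have "\<dots> = exp ((1 - 2 * complex_of_real x) * of_real (ln 2)) * of_real (sqrt pi) * Gamma (2 * complex_of_real x)"
    by (rule Gamma_legendre_duplication[OF n1 n2])
  also have "Gamma (2 * complex_of_real x) = complex_of_real (Gamma (2*x))"
    using Gamma_complex_of_real[of "2*x"] by simp
  also have "exp ((1 - 2 * complex_of_real x) * of_real (ln 2)) * of_real (sqrt pi) * complex_of_real (Gamma (2*x))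
      = complex_of_real (exp ((1 - 2*x) * ln 2) * sqrt pi * Gamma (2*x))"
    by (simp flip: exp_of_real)
  finally show ?thesis by (simp only: of_real_eq_iff)
qed

lemma LT0_bfun_bound: assumes x: "x > 0" shows "\<bar>LT 0 bfun x\<bar> \<le> 1/x"
proof -
  have "norm (integral {0<..} (\<lambda>t. (-t)^0 * bfun t * exp(-x*t))) \<le> integral {0<..} (\<lambda>t. exp(-x*t))"
  proof (rule integral_norm_bound_integral)
    show "(\<lambda>t. (-t)^0 * bfun t * exp(-x*t)) integrable_on {0<..}"
      by (rule LT_integrable[OF bfun_cont bfun_hb x])
    show "(\<lambda>t. exp(-x*t)) integrable_on {0<..}" using exp_integral[OF x] by blast
    show "norm ((-t)^0 * bfun t * exp(-x*t)) \<le> exp(-x*t)" if "t \<in> {0<..}" for t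
      using bfun_nonneg[of t] bfun_le1[of t] that by (simp add: abs_mult mult_le_cancel_right1)
  qed
  thus ?thesis using integral_unique[OF exp_integral[OF x]] unfolding LT_def by simp
qed

lemma LT0_bfun_lim: "(LT 0 bfun \<longlongrightarrow> 0) at_top"
proof (rule Lim_null_comparison)
  show "\<forall>\<^sub>F x in at_top. norm (LT 0 bfun x) \<le> 1/x"
    using eventually_gt_at_top[of "0::real"] by eventually_elim (simp add: LT0_bfun_bound)
  show "((\<lambda>x::real. 1/x) \<longlongrightarrow> 0) at_top" by real_asymp
qed

lemma Hfun_deriv: "x > 0 \<Longrightarrow> (Hfun has_real_derivative (Digamma x - ln x + 1/(2*x))) (at x)"
  unfolding Hfun_def[abs_def]
  by (auto intro!: derivative_eq_intros simp: field_simps)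

lemma H1_deriv: "x > 0 \<Longrightarrow> ((\<lambda>x. Digamma x - ln x + 1/(2*x)) has_real_derivative (Polygamma 1 x - 1/x - 1/(2*x^2))) (at x)"
  by (auto intro!: derivative_eq_intros simp: field_simps power2_eq_square pos_not_nonpos_Int)

lemma Hfun_affine: "\<exists>\<alpha> \<beta>. \<forall>x>0. Hfun x = LT 0 bfun x + \<alpha> + \<beta> * x"
proof -
  define D1 where "D1 = (\<lambda>x. Digamma x - ln x + 1/(2*x) - LT 1 bfun x)"
  have "D1 constant_on {0<..}"
  proof (rule has_field_derivative_0_imp_constant_on)
    fix x :: real assume "x \<in> {0<..}"
    hence x: "x > 0" by simp
    have "(D1 has_real_derivative (Polygamma 1 x - 1/x - 1/(2*x^2)) - LT 2 bfun x) (at x)"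
      unfolding D1_def using H1_deriv[OF x] LT_deriv[OF bfun_cont bfun_hb x, of 1]
      by (intro derivative_intros) (simp_all add: numeral_2_eq_2)
    thus "(D1 has_real_derivative 0) (at x)" using LT2_bfun[OF x] by (simp add: field_simps)
  qed auto
  then obtain \<beta> where b: "\<And>x. x > 0 \<Longrightarrow> D1 x = \<beta>" unfolding constant_on_def by auto
  define D0 where "D0 = (\<lambda>x. Hfun x - LT 0 bfun x - \<beta> * x)"
  have "D0 constant_on {0<..}"
  proof (rule has_field_derivative_0_imp_constant_on)
    fix x :: real assume "x \<in> {0<..}"
    hence x: "x > 0" by simp
    have "(D0 has_real_derivative (Digamma x - ln x + 1/(2*x)) - LT 1 bfun x - \<beta>) (at x)"
      unfolding D0_def using Hfun_deriv[OF x] LT_deriv[OF bfun_cont bfun_hb x, of 0]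
      by (auto intro!: derivative_eq_intros)
    thus "(D0 has_real_derivative 0) (at x)" using b[OF x] by (simp add: D1_def)
  qed auto
  then obtain \<alpha> where a: "\<And>x. x > 0 \<Longrightarrow> D0 x = \<alpha>" unfolding constant_on_def by auto
  show ?thesis
  proof (rule exI[of _ \<alpha>], rule exI[of _ \<beta>], intro allI impI)
    fix x :: real assume "x > 0"
    from a[OF this] show "Hfun x = LT 0 bfun x + \<alpha> + \<beta> * x" unfolding D0_def by linarith
  qed
qed

lemma Hfun_shift: "x > 0 \<Longrightarrow> Hfun (x+1) - Hfun x = (x + 1/2) * (ln x - ln (x+1)) + 1"
proof -
  assume x: "x > 0"
  have "ln_Gamma (x+1) = ln_Gamma x + ln x" by (rule ln_Gamma_plus1_real[OF x])
  thus ?thesis unfolding Hfun_def by (simp add: algebra_simps)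
qed

lemma Hfun_dup: assumes x: "x > 0" shows "Hfun x + Hfun (x + 1/2) - Hfun (2*x) = 1/2 + x * ln x - x * ln (x + 1/2)"
proof -
  have g1: "Gamma x > 0" "Gamma (x+1/2) > 0" "Gamma (2*x) > 0" using x by auto
  have "ln (Gamma x * Gamma (x + 1/2)) = ln (exp ((1 - 2*x) * ln 2) * sqrt pi * Gamma (2*x))"
    using Gamma_dup_real[OF x] by simp
  hence "ln_Gamma x + ln_Gamma (x + 1/2) = (1 - 2*x) * ln 2 + ln pi / 2 + ln_Gamma (2*x)"
    using g1 x by (simp add: ln_mult_pos ln_Gamma_real_pos ln_sqrt)
  moreover have "ln (2*x) = ln 2 + ln x" using x by (simp add: ln_mult_pos)
  moreover have "ln (2*pi) = ln 2 + ln pi" by (simp add: ln_mult_pos)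
  ultimately show ?thesis unfolding Hfun_def by (simp add: algebra_simps)
qed

lemma Hfun_eq_LT: assumes x0: "x > 0" shows "Hfun x = LT 0 bfun x"
proof -
  obtain \<alpha> \<beta> where ab: "\<And>x. x > 0 \<Longrightarrow> Hfun x = LT 0 bfun x + \<alpha> + \<beta> * x"
    using Hfun_affine by blast
  have sh1: "filterlim (\<lambda>x::real. x + 1) at_top at_top" by real_asymp
  have sh2: "filterlim (\<lambda>x::real. x + 1/2) at_top at_top" by real_asymp
  have sh3: "filterlim (\<lambda>x::real. 2*x) at_top at_top" by real_asymp
  note L = LT0_bfun_lim filterlim_compose[OF LT0_bfun_lim sh1] filterlim_compose[OF LT0_bfun_lim sh2]
     filterlim_compose[OF LT0_bfun_lim sh3]
  have "((\<lambda>x. ((x + 1/2) * (ln x - ln (x+1)) + 1) - (LT 0 bfun (x+1) - LT 0 bfun x)) \<longlongrightarrow> 0 - (0 - 0)) at_top"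
  proof (intro tendsto_diff L)
    show "((\<lambda>x::real. (x + 1/2) * (ln x - ln (x+1)) + 1) \<longlongrightarrow> 0) at_top" by real_asymp
  qed
  moreover have "\<forall>\<^sub>F x in at_top. ((x + 1/2) * (ln x - ln (x+1)) + 1) - (LT 0 bfun (x+1) - LT 0 bfun x) = \<beta>"
    using eventually_gt_at_top[of "0::real"]
  proof eventually_elim
    case (elim x)
    thus ?case using Hfun_shift[OF elim] ab[of x] ab[of "x+1"] by (simp add: algebra_simps)
  qed
  ultimately have "((\<lambda>x::real. \<beta>) \<longlongrightarrow> 0) at_top" by (simp add: tendsto_cong)
  hence b0: "\<beta> = 0" by (simp add: tendsto_const_iff)
  have "((\<lambda>x. (1/2 + x * ln x - x * ln (x + 1/2)) - (LT 0 bfun x + LT 0 bfun (x + 1/2) - LT 0 bfun (2*x))) \<longlongrightarrow> 0 - (0 + 0 - 0)) at_top"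
  proof (intro tendsto_diff tendsto_add L)
    show "((\<lambda>x::real. 1/2 + x * ln x - x * ln (x + 1/2)) \<longlongrightarrow> 0) at_top" by real_asymp
  qed
  moreover have "\<forall>\<^sub>F x in at_top. (1/2 + x * ln x - x * ln (x + 1/2)) - (LT 0 bfun x + LT 0 bfun (x + 1/2) - LT 0 bfun (2*x)) = \<alpha>"
    using eventually_gt_at_top[of "0::real"]
  proof eventually_elim
    case (elim x)
    thus ?case using Hfun_dup[OF elim] ab[of x] ab[of "x+1/2"] ab[of "2*x"] b0 by (simp add: algebra_simps)
  qed
  ultimately have "((\<lambda>x::real. \<alpha>) \<longlongrightarrow> 0) at_top" by (simp add: tendsto_cong)
  hence a0: "\<alpha> = 0" by (simp add: tendsto_const_iff)
  show ?thesis using ab[OF x0] a0 b0 by simp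
qed



lemma part1:
  assumes a: "a \<ge> 0" and x: "x > 0"
  shows "((\<lambda>t. ffun a t * exp(-x*t)) has_integral G a x) {0<..}"
proof -
  have ib: "(\<lambda>t. (-t)^0 * bfun t * exp(-x*t)) integrable_on {0<..}"
    by (rule LT_integrable[OF bfun_cont bfun_hb x])
  have hb: "((\<lambda>t. bfun t * exp(-x*t)) has_integral Hfun x) {0<..}"
    using integrable_integral[OF ib] Hfun_eq_LT[OF x] unfolding LT_def by simp
  have xa: "x + a > 0" using a x by simp
  have h2: "((\<lambda>t. bfun t * exp(-x*t) - 1/12 * (t * exp(-(x+a)*t) / (1 - exp(-t)))) has_integral
      (Hfun x - 1/12 * Polygamma 1 (x + a))) {0<..}"
    by (intro has_integral_diff hb has_integral_mult_right trigamma_integral xa)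
  show ?thesis unfolding G_eq
  proof (rule has_integral_eq[OF _ h2])
    fix t :: real assume "t \<in> {0<..}"
    hence t: "t > 0" by simp
    have e: "exp(-(x+a)*t) = exp(-a*t) * exp(-x*t)" by (simp flip: exp_add add: algebra_simps)
    show "bfun t * exp(-x*t) - 1/12 * (t * exp(-(x+a)*t) / (1 - exp(-t))) = ffun a t * exp(-x*t)"
      unfolding ffun_split[OF t] e by (simp add: algebra_simps)
  qed
qed

lemma G_LT: "a \<ge> 0 \<Longrightarrow> x > 0 \<Longrightarrow> G a x = LT 0 (ffun a) x"
  using part1[of a x] unfolding LT_def by (simp add: integral_unique)

lemma ffun_pos: assumes a: "a \<ge> 1/2" and t: "t > 0" shows "ffun a t > 0"
proof -
  have "t^3/6 * exp(-a*t) \<le> t^3/6 * exp(-t/2)"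
    using a t by (intro mult_left_mono) (auto simp: mult_right_mono)
  also have "\<dots> < t - 2 + (2+t)*exp(-t)" by (rule N_gt_half[OF t])
  finally show ?thesis unfolding ffun_def using t by (intro divide_pos_pos) auto
qed

lemma ffun0_neg: assumes t: "t > 0" shows "ffun 0 t < 0"
  unfolding ffun_def using N_lt_cube[OF t] t by (intro divide_neg_pos) auto

lemma G_pos_near0:
  assumes a: "a > 0" shows "\<exists>x>0. G a x > 0"
proof -
  define c where "c = (\<lambda>x. ln_Gamma (x+1) - 1/12 * Polygamma 1 (x + a) + x - 1/2 * ln (2*pi))"
  have eqG: "G a x = c x + (-(x + 1/2) * ln x)" if x: "x > 0" for x
    unfolding G_eq Hfun_def c_def using ln_Gamma_plus1_real[OF x] by (simp add: algebra_simps)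
  have c_lim: "(c \<longlongrightarrow> c 0) (at_right 0)"
  proof -
    have i1: "isCont ln_Gamma (0 + 1 :: real)" by (rule DERIV_isCont, rule has_field_derivative_ln_Gamma_real) simp
    have i2: "isCont (Polygamma 1) (0 + a :: real)" using isCont_Polygamma[where f="\<lambda>x. x" and z=a and n=1] pos_not_nonpos_Int[OF a] by simp
    have t1: "((\<lambda>x::real. x + 1) \<longlongrightarrow> 0 + 1) (at_right 0)" by (intro tendsto_intros)
    have t2: "((\<lambda>x::real. x + a) \<longlongrightarrow> 0 + a) (at_right 0)" by (intro tendsto_intros)
    show ?thesis unfolding c_def
      by (intro tendsto_intros isCont_tendsto_compose[OF i1 t1] isCont_tendsto_compose[OF i2 t2])
  qed
  have g_lim: "filterlim (\<lambda>x::real. -(x + 1/2) * ln x) at_top (at_right 0)" by real_asymp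
  have "filterlim (\<lambda>x. c x + (-(x + 1/2) * ln x)) at_top (at_right 0)"
    by (rule filterlim_tendsto_add_at_top[OF c_lim g_lim])
  hence "eventually (\<lambda>x. c x + (-(x + 1/2) * ln x) > 0) (at_right 0)"
    by (simp add: filterlim_at_top_dense)
  moreover have "eventually (\<lambda>x::real. x > 0) (at_right 0)" by (simp add: eventually_at_right_less)
  ultimately have "eventually (\<lambda>x. x > 0 \<and> G a x > 0) (at_right 0)"
    by eventually_elim (simp add: eqG)
  from eventually_happens[OF this] show ?thesis by auto
qed

lemma ffun_upper:
  fixes a t e d K :: real
  assumes a: "0 \<le> a" "a < 1/2" and t: "t > 0"
    and e_def: "e = (1 - 2*a)/12" and d_def: "d = 20*e" and K_def: "K = 2/d^2 + (2 + e/4)/d"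
  shows "ffun a t \<le> -e/4*t + K*t^2"
proof -
  have e: "e > 0" using a by (simp add: e_def)
  have d: "d > 0" using e by (simp add: d_def)
  have K: "K \<ge> 0" using d e by (simp add: K_def)
  show ?thesis
  proof (cases "t \<le> d")
    case True
    define N where "N = t - 2 + (2+t)*exp(-t)"
    define num where "num = N - t^3/6*exp(-a*t)"
    define den where "den = 2*t^2*(1-exp(-t))"
    have N5: "N \<le> t^3/6 - t^4/12 + t^5/40" unfolding N_def by (rule N_upper5) (use t in simp)
    have ex: "1 - a*t \<le> exp(-a*t)" using exp_ge_add_one_self[of "-a*t"] by simp
    have "t^3/6*(1 - a*t) \<le> t^3/6*exp(-a*t)" using ex t by (intro mult_left_mono) auto
    hence "num \<le> t^3/6 - t^4/12 + t^5/40 - t^3/6*(1 - a*t)" unfolding num_def using N5 by linarith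
    also have "\<dots> = -e*t^4 + t^5/40" by (simp add: e_def field_simps power_numeral_reduce)
    also have "t^5/40 \<le> e*t^4/2"
    proof -
      have "t^5/40 = t^4 * (t/40)" by (simp add: power_numeral_reduce)
      also have "\<dots> \<le> t^4 * (e/2)" using True t by (intro mult_left_mono) (auto simp: d_def)
      finally show ?thesis by (simp add: mult.commute)
    qed
    finally have num1: "num \<le> -e*t^4/2" by simp
    have t4: "t^4 > 0" using t by simp
    have "e*t^4 > 0" using e t4 by simp
    hence numneg: "num < 0" using num1 by linarith
    have den_pos: "den > 0" using t by (simp add: den_def)
    have "1 - exp(-t) \<le> t" using exp_ge_add_one_self[of "-t"] by simp
    hence den_le: "den \<le> 2*t^3" unfolding den_def using t
      by (simp add: power2_eq_square power3_eq_cube mult_left_mono)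
    have "ffun a t = num / den" by (simp add: ffun_def num_def N_def den_def)
    also have "\<dots> \<le> num / (2*t^3)"
      by (rule divide_left_mono_neg[OF den_le]) (use numneg den_pos t in auto)
    also have "\<dots> \<le> (-e*t^4/2) / (2*t^3)" using num1 t by (intro divide_right_mono) auto
    also have "\<dots> = -e/4*t"
    proof -
      have t3: "t^3 \<noteq> 0" using t by simp
      have "t^4 = t^3 * t" by (simp add: power3_eq_cube power4_eq_xxxx)
      thus ?thesis using t3 by simp
    qed
    also have "\<dots> \<le> -e/4*t + K*t^2" using K by simp
    finally show ?thesis .
  next
    case False
    hence td: "t > d" by simp
    have "ffun a t \<le> 2*(1+t)" using ffun_bound[OF t a(1)] by simp
    also have "\<dots> \<le> -e/4*t + K*t^2"
    proof -
      have q1: "t^2/d^2 \<ge> 1" using td d by (simp add: power_mono)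
      have q2: "t^2/d \<ge> t" using td d t by (simp add: power2_eq_square field_simps)
      have "K*t^2 = 2*(t^2/d^2) + (2 + e/4)*(t^2/d)" by (simp add: K_def field_simps)
      also have "\<dots> \<ge> 2*1 + (2 + e/4)*t" using q1 q2 e by (intro add_mono mult_left_mono) auto
      finally show ?thesis by (simp add: algebra_simps)
    qed
    finally show ?thesis .
  qed
qed

lemma G_neg_small:
  assumes a: "0 \<le> a" "a < 1/2" shows "\<exists>x>0. G a x < 0"
proof -
  define e where "e = (1 - 2*a)/12"
  define d where "d = 20*e"
  define K where "K = 2/d^2 + (2 + e/4)/d"
  have e: "e > 0" using a by (simp add: e_def)
  have d: "d > 0" using e by (simp add: d_def)
  have K: "K \<ge> 0" using d e by (simp add: K_def)
  define x where "x = 8*K/e + 1"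
  have x: "x > 0" using K e by (simp add: x_def add_nonneg_pos)
  have up: "((\<lambda>t. -e/4*(t*exp(-x*t)) + K*(t^2*exp(-x*t))) has_integral (-e/4*(1/x^2) + K*(2/x^3))) {0<..}"
    by (intro has_integral_add has_integral_mult_right t_exp_integral t2_exp_integral x)
  have "G a x \<le> -e/4*(1/x^2) + K*(2/x^3)"
  proof (rule has_integral_le[OF part1[OF a(1) x] up])
    fix t :: real assume "t \<in> {0<..}"
    hence t: "t > 0" by simp
    have "ffun a t * exp(-x*t) \<le> (-e/4*t + K*t^2) * exp(-x*t)"
      by (rule mult_right_mono[OF ffun_upper[OF a t e_def d_def K_def]]) simp
    thus "ffun a t * exp(-x*t) \<le> -e/4*(t*exp(-x*t)) + K*(t^2*exp(-x*t))"
      by (simp add: algebra_simps)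
  qed
  also have "-e/4*(1/x^2) + K*(2/x^3) = (8*K - e*x) / (4*x^3)"
    using x by (simp add: field_simps power2_eq_square power3_eq_cube)
  also have "\<dots> < 0"
  proof -
    have "e*x = 8*K + e" using e by (simp add: x_def field_simps)
    hence "8*K - e*x < 0" using e by simp
    thus ?thesis using x by (simp add: divide_neg_pos)
  qed
  finally show ?thesis using x by blast
qed

lemma LT_neg: "LT k (\<lambda>t. - h t) x = - LT k h x"
  unfolding LT_def by simp

theorem mainTheorem14:
  fixes a :: real
  assumes "a \<ge> 0"
  shows "(\<forall>x>0. ((\<lambda>t. (t - 2 + (2 + t) * exp (-t) - t^3 / 6 * exp (-a*t))
                      / (2 * t^2 * (1 - exp (-t))) * exp (-x*t)) has_integral G a x) {0<..})
       \<and> (completely_monotone (G a) \<longleftrightarrow> a \<ge> 1/2)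
       \<and> (completely_monotone (\<lambda>x. - G a x) \<longleftrightarrow> a = 0)"
proof (intro conjI iffI allI impI)
  fix x :: real assume "x > 0"
  from part1[OF assms this] show "((\<lambda>t. (t - 2 + (2 + t) * exp (-t) - t^3 / 6 * exp (-a*t))
                      / (2 * t^2 * (1 - exp (-t))) * exp (-x*t)) has_integral G a x) {0<..}"
    unfolding ffun_def .
next
  assume cm: "completely_monotone (G a)"
  show "a \<ge> 1/2"
  proof (rule ccontr)
    assume "\<not> a \<ge> 1/2"
    then obtain x where x: "x > 0" "G a x < 0" using G_neg_small[OF assms] by auto
    from cm x(1) have "(-1)^0 * (deriv^^0) (G a) x > 0" unfolding completely_monotone_def by blast
    thus False using x by simp
  qed
next
  assume a: "a \<ge> 1/2"
  show "completely_monotone (G a)"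
  proof (rule CM_of_LT[OF ffun_cont])
    show "\<bar>ffun a t\<bar> \<le> 2 * (1 + t)" if "t > 0" for t using ffun_bound[OF that assms] .
    show "ffun a t > 0" if "t > 0" for t using ffun_pos[OF a that] .
    show "G a x = LT 0 (ffun a) x" if "x > 0" for x using G_LT[OF assms that] .
  qed
next
  assume cm: "completely_monotone (\<lambda>x. - G a x)"
  show "a = 0"
  proof (rule ccontr)
    assume "a \<noteq> 0"
    hence "a > 0" using assms by simp
    then obtain x where x: "x > 0" "G a x > 0" using G_pos_near0 by auto
    from cm x(1) have "(-1)^0 * (deriv^^0) (\<lambda>x. - G a x) x > 0" unfolding completely_monotone_def by blast
    thus False using x by simp
  qed
next
  assume a: "a = 0"
  show "completely_monotone (\<lambda>x. - G a x)"
  proof (rule CM_of_LT[where h="\<lambda>t. - ffun 0 t" and M=2])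
    show "continuous_on {0<..} (\<lambda>t. - ffun 0 t)" by (intro continuous_intros ffun_cont)
    show "\<bar>- ffun 0 t\<bar> \<le> 2 * (1 + t)" if "t > 0" for t using ffun_bound[OF that order_refl] by simp
    show "- ffun 0 t > 0" if "t > 0" for t using ffun0_neg[OF that] by simp
    show "- G a x = LT 0 (\<lambda>t. - ffun 0 t) x" if "x > 0" for x using G_LT[OF order_refl that] a
      by (simp add: LT_neg)
  qed
qed


end
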